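(* Let $(\mathfrak{g},[\cdot,\cdot]_{\mathfrak{g}},\phi_{\mathfrak{g}})$ be a weakly involutive Hom-Lie algebra, $r\in\mathfrak g\otimes\mathfrak g$, and $\Delta(x)=(\mathrm{ad}_x\otimes\phi_{\mathfrak g}+\phi_{\mathfrak g}\otimes\mathrm{ad}_x)r$. Then for all $x,y\in\mathfrak g$ (juxtaposition denoting composition): (a) $\Delta(\phi_{\mathfrak g}(x))-(\phi_{\mathfrak g}\otimes\phi_{\mathfrak g})\Delta(x)=(\mathrm{ad}_{\phi_{\mathfrak g}(x)}\phi_{\mathfrak g}\otimes\phi_{\mathfrak g}-\phi_{\mathfrak g}\otimes\mathrm{ad}_{\phi_{\mathfrak g}(x)}\phi_{\mathfrak g})(\phi_{\mathfrak g}\otimes\mathrm{Id}-\mathrm{Id}\otimes\phi_{\mathfrak g})r$; (b) $(\phi_{\mathfrak g}^2\otimes\mathrm{Id})\Delta(x)-\Delta(x)=(\phi_{\mathfrak g}\otimes\mathrm{ad}_x)(\phi_{\mathfrak g}\otimes\mathrm{Id}+\mathrm{Id}\otimes\phi_{\mathfrak g})(\phi_{\mathfrak g}\otimes\mathrm{Id}-\mathrm{Id}\otimes\phi_{\mathfrak g})r$; (c) $\Delta[x,y]_{\mathfrak g}-(\mathrm{ad}_{\phi_{\mathfrak g}(x)}\Delta(y)-\mathrm{ad}_{\phi_{\mathfrak g}(y)}\Delta(x))=(\mathrm{ad}_{[x,y]_{\mathfrak g}}\phi_{\mathfrak g}\otimes\phi_{\mathfrak g}-\phi_{\mathfrak g}\otimes\mathrm{ad}_{[x,y]_{\mathfrak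 g}}\phi_{\mathfrak g})(\phi_{\mathfrak g}\otimes\mathrm{Id}-\mathrm{Id}\otimes\phi_{\mathfrak g})r$.
   Context: A Hom-Lie algebra $(\mathfrak{g},[\cdot,\cdot]_{\mathfrak{g}},\phi_{\mathfrak{g}})$: skew-symmetric bilinear bracket and linear map with $\phi_{\mathfrak g}[x,y]=[\phi_{\mathfrak g}x,\phi_{\mathfrak g}y]$ and $[\phi_{\mathfrak g}(x),[y,z]]+[\phi_{\mathfrak g}(y),[z,x]]+[\phi_{\mathfrak g}(z),[x,y]]=0$; weakly involutive if $[\phi_{\mathfrak g}^2(x),y]=[x,y]$ for all $x,y$. $\mathrm{ad}_xy=[x,y]_{\mathfrak g}$; for $z\in\mathfrak g$ and $t\in\mathfrak g\otimes\mathfrak g$, $\mathrm{ad}_zt$ means $(\mathrm{ad}_z\otimes\phi_{\mathfrak g}+\phi_{\mathfrak g}\otimes\mathrm{ad}_z)t$ (this is the meaning of $\mathrm{ad}_{\phi_{\mathfrak g}(x)}\Delta(y)$ in (c)). *)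

theory Defs
  imports Complex_Main
begin

text \<open>Elements of g \<otimes> g are represented by finite formal sums of pure tensors,
  i.e. lists of pairs (a,b) standing for the sum of the a \<otimes> b (scalars are absorbed
  into the first factor). Two such representatives denote the same element of the
  tensor product over the field iff every bilinear form takes the same value on them
  (over a field, g \<otimes> g embeds into the dual of the space of bilinear forms).\<close>

type_synonym 'v tens = "('v \<times> 'v) list"

definition tmap :: "('v \<Rightarrow> 'v) \<Rightarrow> ('v \<Rightarrow> 'v) \<Rightarrow> 'v tens \<Rightarrow> 'v tens" where
  "tmap A B t = map (\<lambda>(a, b). (A a, B b)) t"

definition tadd :: "'v tens \<Rightarrow> 'v tens \<Rightarrow> 'v tens" where
  "tadd s t = s @ t"

definition tneg :: "'v::ab_group_add tens \<Rightarrow> 'v tens" where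
  "tneg t = map (\<lambda>(a, b). (- a, b)) t"

definition tdiff :: "'v::ab_group_add tens \<Rightarrow> 'v tens \<Rightarrow> 'v tens" where
  "tdiff s t = tadd s (tneg t)"

definition bilinear_form :: "('k::field \<Rightarrow> 'v::ab_group_add \<Rightarrow> 'v) \<Rightarrow> ('v \<Rightarrow> 'v \<Rightarrow> 'k) \<Rightarrow> bool" where
  "bilinear_form scale \<beta> \<longleftrightarrow>
     (\<forall>a. Vector_Spaces.linear scale (*) (\<beta> a)) \<and> (\<forall>b. Vector_Spaces.linear scale (*) (\<lambda>a. \<beta> a b))"

definition tpair :: "('v \<Rightarrow> 'v \<Rightarrow> 'k::field) \<Rightarrow> 'v tens \<Rightarrow> 'k" where
  "tpair \<beta> t = (\<Sum>(a, b)\<leftarrow>t. \<beta> a b)"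

definition teq :: "('k::field \<Rightarrow> 'v::ab_group_add \<Rightarrow> 'v) \<Rightarrow> 'v tens \<Rightarrow> 'v tens \<Rightarrow> bool" where
  "teq scale s t \<longleftrightarrow> (\<forall>\<beta>. bilinear_form scale \<beta> \<longrightarrow> tpair \<beta> s = tpair \<beta> t)"

definition hom_lie :: "('k::field \<Rightarrow> 'v::ab_group_add \<Rightarrow> 'v) \<Rightarrow> ('v \<Rightarrow> 'v \<Rightarrow> 'v) \<Rightarrow> ('v \<Rightarrow> 'v) \<Rightarrow> bool" where
  "hom_lie scale br \<phi> \<longleftrightarrow>
     vector_space scale \<and>
     (\<forall>x. Vector_Spaces.linear scale scale (br x)) \<and>
     (\<forall>y. Vector_Spaces.linear scale scale (\<lambda>x. br x y)) \<and>
     (\<forall>x y. br x y = - br y x) \<and>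
     Vector_Spaces.linear scale scale \<phi> \<and>
     (\<forall>x y. \<phi> (br x y) = br (\<phi> x) (\<phi> y)) \<and>
     (\<forall>x y z. br (\<phi> x) (br y z) + br (\<phi> y) (br z x) + br (\<phi> z) (br x y) = 0)"

definition weakly_involutive :: "('v \<Rightarrow> 'v \<Rightarrow> 'v) \<Rightarrow> ('v \<Rightarrow> 'v) \<Rightarrow> bool" where
  "weakly_involutive br \<phi> \<longleftrightarrow> (\<forall>x y. br (\<phi> (\<phi> x)) y = br x y)"

definition adT :: "('v \<Rightarrow> 'v \<Rightarrow> 'v) \<Rightarrow> ('v \<Rightarrow> 'v) \<Rightarrow> 'v \<Rightarrow> 'v tens \<Rightarrow> 'v tens" where
  "adT br \<phi> z t = tadd (tmap (br z) \<phi> t) (tmap \<phi> (br z) t)"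

definition Delta :: "('v \<Rightarrow> 'v \<Rightarrow> 'v) \<Rightarrow> ('v \<Rightarrow> 'v) \<Rightarrow> 'v tens \<Rightarrow> 'v \<Rightarrow> 'v tens" where
  "Delta br \<phi> r x = adT br \<phi> x r"

end

theory Submission
  imports Defs
begin

lemma additive_neg:
  fixes f :: "'a::ab_group_add \<Rightarrow> 'b::ab_group_add"
  assumes "\<forall>x y. f (x + y) = f x + f y"
  shows "f (- x) = - f x"
proof -
  have "f 0 = f 0 + f 0" using assms by (metis add.right_neutral)
  hence z: "f 0 = 0" by simp
  have "f (x + - x) = f x + f (- x)" using assms by blast
  thus ?thesis using z by (simp add: eq_neg_iff_add_eq_0 add.commute)
qed

lemma abg3: "(A::'a::ab_group_add) + B + C = 0 \<Longrightarrow> A = - B - C"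
  by (metis add_diff_cancel eq_neg_iff_add_eq_0 minus_diff_commute)

lemma tneg_tmap: "tneg t = tmap uminus id t"
  by (simp add: tneg_def tmap_def)

lemma tmap_tmap: "tmap A B (tmap C D t) = tmap (A \<circ> C) (B \<circ> D) t"
  by (induct t) (auto simp: tmap_def)

lemma tmap_tadd: "tmap A B (tadd s t) = tadd (tmap A B s) (tmap A B t)"
  by (simp add: tmap_def tadd_def)

lemma tpair_tadd: "tpair \<beta> (tadd s t) = tpair \<beta> s + tpair \<beta> t"
  by (simp add: tpair_def tadd_def)

lemma tpair_tmap: "tpair \<beta> (tmap A B t) = (\<Sum>p\<leftarrow>t. \<beta> (A (fst p)) (B (snd p)))"
  by (induct t) (auto simp: tpair_def tmap_def)

lemmas norm = tdiff_def tneg_tmap tmap_tmap tmap_tadd tpair_tadd tpair_tmap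
  adT_def Delta_def sum_list_addf[symmetric]

lemma sl_cong: "(\<And>p. p \<in> set r \<Longrightarrow> f p = g p) \<Longrightarrow> sum_list (map f r) = sum_list (map g r)"
  by (metis map_cong)

theorem lemma4p1:
  fixes scale :: "'k::field \<Rightarrow> 'v::ab_group_add \<Rightarrow> 'v"
    and br :: "'v \<Rightarrow> 'v \<Rightarrow> 'v" and \<phi> :: "'v \<Rightarrow> 'v" and r :: "'v tens"
  assumes "hom_lie scale br \<phi>" and "weakly_involutive br \<phi>"
  defines "s \<equiv> tdiff (tmap \<phi> id r) (tmap id \<phi> r)"
  shows "(\<forall>x. teq scale
            (tdiff (Delta br \<phi> r (\<phi> x)) (tmap \<phi> \<phi> (Delta br \<phi> r x)))
            (tdiff (tmap (br (\<phi> x) \<circ> \<phi>) \<phi> s) (tmap \<phi> (br (\<phi> x) \<circ> \<phi>) s))) \<and>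
         (\<forall>x. teq scale
            (tdiff (tmap (\<phi> \<circ> \<phi>) id (Delta br \<phi> r x)) (Delta br \<phi> r x))
            (tmap \<phi> (br x) (tadd (tmap \<phi> id s) (tmap id \<phi> s)))) \<and>
         (\<forall>x y. teq scale
            (tdiff (Delta br \<phi> r (br x y))
                   (tdiff (adT br \<phi> (\<phi> x) (Delta br \<phi> r y)) (adT br \<phi> (\<phi> y) (Delta br \<phi> r x))))
            (tdiff (tmap (br (br x y) \<circ> \<phi>) \<phi> s) (tmap \<phi> (br (br x y) \<circ> \<phi>) s)))"
proof -
  note H = assms(1)[unfolded hom_lie_def Vector_Spaces.linear_iff]
  have padd: "\<And>u v. \<phi> (u + v) = \<phi> u + \<phi> v" using H by blast
  have pneg: "\<And>u. \<phi> (- u) = - \<phi> u" by (rule additive_neg) (use padd in blast)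
  have badd2: "\<And>w u v. br w (u + v) = br w u + br w v" using H by blast
  have bneg2: "\<And>w u. br w (- u) = - br w u" by (rule additive_neg) (use badd2 in blast)
  have badd1: "\<And>w u v. br (u + v) w = br u w + br v w" using H by blast
  have bneg1: "\<And>w u. br (- u) w = - br u w" by (rule additive_neg[where f="\<lambda>u. br u w" for w, simplified]) (use badd1 in blast)
  have skew: "\<And>u v. br u v = - br v u" using H by blast
  have mult: "\<And>u v. \<phi> (br u v) = br (\<phi> u) (\<phi> v)" using H by blast
  have jac: "\<And>u v w. br (\<phi> u) (br v w) + br (\<phi> v) (br w u) + br (\<phi> w) (br u v) = 0" using H by blast
  have wi1: "\<And>u v. br (\<phi> (\<phi> u)) v = br u v" using assms(2) unfolding weakly_involutive_def by blast
  have wi2: "\<And>u v. br v (\<phi> (\<phi> u)) = br v u" using wi1 skew by metis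
  have J: "\<And>x y a. br (\<phi> x) (br y a) = br (br x y) (\<phi> a) + br (\<phi> y) (br x a)"
  proof -
    fix x y a
    have e: "br (\<phi> x) (br y a) + br (\<phi> y) (br a x) + br (\<phi> a) (br x y) = 0" by (rule jac)
    have s1: "br a x = - br x a" by (rule skew)
    have s2: "br (\<phi> a) (br x y) = - br (br x y) (\<phi> a)" by (rule skew)
    show "br (\<phi> x) (br y a) = br (br x y) (\<phi> a) + br (\<phi> y) (br x a)"
      using abg3[OF e] unfolding s1 s2 bneg2 by (simp add: algebra_simps)
  qed
  show ?thesis
  unfolding teq_def s_def
  proof (intro conjI allI impI)
    fix \<beta> :: "'v \<Rightarrow> 'v \<Rightarrow> 'k" and x
    assume bf: "bilinear_form scale \<beta>"
    note B = bf[unfolded bilinear_form_def Vector_Spaces.linear_iff]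
    have fadd1: "\<And>w u v. \<beta> (u + v) w = \<beta> u w + \<beta> v w" using B by blast
    have fneg1: "\<And>w u. \<beta> (- u) w = - \<beta> u w" by (rule additive_neg[where f="\<lambda>u. \<beta> u w" for w, simplified]) (use fadd1 in blast)
    have fadd2: "\<And>w u v. \<beta> w (u + v) = \<beta> w u + \<beta> w v" using B by blast
    have fneg2: "\<And>w u. \<beta> w (- u) = - \<beta> w u" by (rule additive_neg) (use fadd2 in blast)
    have fdiff1: "\<And>w u v. \<beta> (u - v) w = \<beta> u w - \<beta> v w"
      by (metis diff_conv_add_uminus fadd1 fneg1)
    note S = pneg bneg1 bneg2 fneg1 fneg2 mult wi1 wi2 fadd1 fadd2 padd badd1 badd2
    show "tpair \<beta> (tdiff (Delta br \<phi> r (\<phi> x)) (tmap \<phi> \<phi> (Delta br \<phi> r x))) =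
       tpair \<beta> (tdiff (tmap (br (\<phi> x) \<circ> \<phi>) \<phi> (tdiff (tmap \<phi> id r) (tmap id \<phi> r)))
         (tmap \<phi> (br (\<phi> x) \<circ> \<phi>) (tdiff (tmap \<phi> id r) (tmap id \<phi> r))))"
      unfolding norm
      by (rule sl_cong) (simp add: S algebra_simps)
    show "tpair \<beta> (tdiff (tmap (\<phi> \<circ> \<phi>) id (Delta br \<phi> r x)) (Delta br \<phi> r x)) =
       tpair \<beta> (tmap \<phi> (br x) (tadd (tmap \<phi> id (tdiff (tmap \<phi> id r) (tmap id \<phi> r))) (tmap id \<phi> (tdiff (tmap \<phi> id r) (tmap id \<phi> r)))))"
      unfolding norm
      by (rule sl_cong) (simp add: S algebra_simps)
  next
    fix \<beta> :: "'v \<Rightarrow> 'v \<Rightarrow> 'k" and x y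
    assume bf: "bilinear_form scale \<beta>"
    note B = bf[unfolded bilinear_form_def Vector_Spaces.linear_iff]
    have fadd1: "\<And>w u v. \<beta> (u + v) w = \<beta> u w + \<beta> v w" using B by blast
    have fneg1: "\<And>w u. \<beta> (- u) w = - \<beta> u w" by (rule additive_neg[where f="\<lambda>u. \<beta> u w" for w, simplified]) (use fadd1 in blast)
    have fadd2: "\<And>w u v. \<beta> w (u + v) = \<beta> w u + \<beta> w v" using B by blast
    have fneg2: "\<And>w u. \<beta> w (- u) = - \<beta> w u" by (rule additive_neg) (use fadd2 in blast)
    have fdiff1: "\<And>w u v. \<beta> (u - v) w = \<beta> u w - \<beta> v w"
      by (metis diff_conv_add_uminus fadd1 fneg1)
    note S = pneg bneg1 bneg2 fneg1 fneg2 mult wi1 wi2 fadd1 fadd2 padd badd1 badd2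
    show "tpair \<beta> (tdiff (Delta br \<phi> r (br x y))
           (tdiff (adT br \<phi> (\<phi> x) (Delta br \<phi> r y)) (adT br \<phi> (\<phi> y) (Delta br \<phi> r x)))) =
       tpair \<beta> (tdiff (tmap (br (br x y) \<circ> \<phi>) \<phi> (tdiff (tmap \<phi> id r) (tmap id \<phi> r)))
         (tmap \<phi> (br (br x y) \<circ> \<phi>) (tdiff (tmap \<phi> id r) (tmap id \<phi> r))))"
      unfolding norm
      by (rule sl_cong) (simp add: S J[of x y] algebra_simps, simp only: fdiff1 fneg1, simp add: algebra_simps)
  qed
qed

end
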